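(* Let $1\le\nu<\infty$. The asymptotics of the iterates of bounded composition operators $C_\phi f=f\circ\phi$ on $\mathcal{F}^\nu$ are as follows. (1) If $\phi(z)=az$ with $|a|=1$ and $a\neq 1$, then the sequence $(C_\phi^n)_{n\ge1}$ consists of unitary operators, and it does not converge, even weakly. (2) If $\phi(z)=az+b$ with $|a|<1$ and $b\in\mathbb{C}$, then the sequence $(C_\phi^n)_{n\ge 1}$ converges in operator norm to the operator mapping each $f\in\mathcal{F}^\nu$ to the constant function with value $f(b/(1-a))$.
   Context: For $1\le\nu<\infty$, the Fock space $\mathcal{F}^\nu$ is the space of entire functions $f$ with $\|f\|_\nu:=\left(\frac{\nu}{2\pi}\int_{\mathbb{C}}|f(z)|^\nu e^{-\nu|z|^2/2}\,dm(z)\right)^{1/\nu}<\infty$ ($m$ = Lebesgue area measure). For an entire function $\phi$, $C_\phi f=f\circ\phi$. *)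

theory Defs
  imports "HOL-Complex_Analysis.Complex_Analysis"
begin

definition fock_integral :: "real \<Rightarrow> (complex \<Rightarrow> complex) \<Rightarrow> ennreal" where
  "fock_integral \<nu> f =
     (\<integral>\<^sup>+ z. ennreal (cmod (f z) powr \<nu> * exp (- \<nu> * (cmod z)\<^sup>2 / 2)) \<partial>lborel)"

definition fock_space :: "real \<Rightarrow> (complex \<Rightarrow> complex) set" where
  "fock_space \<nu> = {f. f holomorphic_on UNIV \<and> fock_integral \<nu> f < \<infinity>}"

(* \<parallel>f\<parallel>_\<nu>  (meaningful for f in the Fock space) *)
definition fock_norm :: "real \<Rightarrow> (complex \<Rightarrow> complex) \<Rightarrow> real" where
  "fock_norm \<nu> f = (\<nu> / (2 * pi) * enn2real (fock_integral \<nu> f)) powr (1 / \<nu>)"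

definition fock_bounded_operator :: "real \<Rightarrow> ((complex \<Rightarrow> complex) \<Rightarrow> (complex \<Rightarrow> complex)) \<Rightarrow> bool" where
  "fock_bounded_operator \<nu> T \<longleftrightarrow>
     (\<forall>f\<in>fock_space \<nu>. T f \<in> fock_space \<nu>) \<and>
     (\<forall>f\<in>fock_space \<nu>. \<forall>g\<in>fock_space \<nu>. T (\<lambda>z. f z + g z) = (\<lambda>z. T f z + T g z)) \<and>
     (\<forall>f\<in>fock_space \<nu>. \<forall>c. T (\<lambda>z. c * f z) = (\<lambda>z. c * T f z)) \<and>
     (\<exists>K. \<forall>f\<in>fock_space \<nu>. fock_norm \<nu> (T f) \<le> K * fock_norm \<nu> f)"

definition fock_bounded_functional :: "real \<Rightarrow> ((complex \<Rightarrow> complex) \<Rightarrow> complex) \<Rightarrow> bool" where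
  "fock_bounded_functional \<nu> \<Lambda> \<longleftrightarrow>
     (\<forall>f\<in>fock_space \<nu>. \<forall>g\<in>fock_space \<nu>. \<Lambda> (\<lambda>z. f z + g z) = \<Lambda> f + \<Lambda> g) \<and>
     (\<forall>f\<in>fock_space \<nu>. \<forall>c. \<Lambda> (\<lambda>z. c * f z) = c * \<Lambda> f) \<and>
     (\<exists>K. \<forall>f\<in>fock_space \<nu>. cmod (\<Lambda> f) \<le> K * fock_norm \<nu> f)"

definition fock_unitary :: "real \<Rightarrow> ((complex \<Rightarrow> complex) \<Rightarrow> (complex \<Rightarrow> complex)) \<Rightarrow> bool" where
  "fock_unitary \<nu> T \<longleftrightarrow>
     fock_bounded_operator \<nu> T \<and>
     (\<forall>f\<in>fock_space \<nu>. fock_norm \<nu> (T f) = fock_norm \<nu> f) \<and>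
     (\<forall>g\<in>fock_space \<nu>. \<exists>f\<in>fock_space \<nu>. T f = g)"

definition fock_op_dist :: "real \<Rightarrow> ((complex \<Rightarrow> complex) \<Rightarrow> (complex \<Rightarrow> complex))
     \<Rightarrow> ((complex \<Rightarrow> complex) \<Rightarrow> (complex \<Rightarrow> complex)) \<Rightarrow> ereal" where
  "fock_op_dist \<nu> T S =
     (SUP f\<in>{f\<in>fock_space \<nu>. fock_norm \<nu> f \<le> 1}.
        (let g = (\<lambda>z. T f z - S f z) in
         if g \<in> fock_space \<nu> then ereal (fock_norm \<nu> g) else \<infinity>))"

definition comp_op :: "(complex \<Rightarrow> complex) \<Rightarrow> (complex \<Rightarrow> complex) \<Rightarrow> (complex \<Rightarrow> complex)" where
  "comp_op \<phi> f = f \<circ> \<phi>"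

end

theory Submission
  imports Defs "HOL-Probability.Probability"
begin


lemma measurable_Complex[measurable (raw)]:
  assumes "f \<in> borel_measurable M" "g \<in> borel_measurable M"
  shows "(\<lambda>x. Complex (f x) (g x)) \<in> borel_measurable M"
proof -
  have "(\<lambda>x. Complex (f x) (g x)) = (\<lambda>x. f x *\<^sub>R 1 + g x *\<^sub>R \<i>)"
    by (auto simp: complex_eq_iff)
  then show ?thesis by (simp only:) (intro borel_measurable_add borel_measurable_scaleR borel_measurable_const assms)
qed

lemma lborel_complex_distr:
  "(lborel :: complex measure) = distr (lborel \<Otimes>\<^sub>M lborel) borel (\<lambda>p. Complex (fst p) (snd p))"
proof (rule lborel_eqI)
  fix l u :: complex
  assume le: "\<And>b. b \<in> Basis \<Longrightarrow> l \<bullet> b \<le> u \<bullet> b"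
  have le1: "Re l \<le> Re u" "Im l \<le> Im u" using le[of 1] le[of \<i>] by (auto simp: Basis_complex_def)
  have pre: "(\<lambda>p. Complex (fst p) (snd p)) -` box l u \<inter> space (lborel \<Otimes>\<^sub>M lborel)
        = {Re l<..<Re u} \<times> {Im l<..<Im u}"
    by (auto simp: box_def Basis_complex_def space_pair_measure)
  have meas: "(\<lambda>p. Complex (fst p) (snd p)) \<in> lborel \<Otimes>\<^sub>M lborel \<rightarrow>\<^sub>M borel"
    by measurable
  show "emeasure (distr (lborel \<Otimes>\<^sub>M lborel) borel (\<lambda>p. Complex (fst p) (snd p))) (box l u) =
        (\<Prod>b\<in>Basis. (u - l) \<bullet> b)"
    using le1
    by (simp add: emeasure_distr[OF meas] pre lborel.emeasure_pair_measure_Times[where A="{Re l<..<Re u}" and B="{Im l<..<Im u}"]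
        Basis_complex_def ennreal_mult)
qed simp

lemma nn_integral_complex:
  fixes F :: "complex \<Rightarrow> ennreal"
  assumes [measurable]: "F \<in> borel_measurable borel"
  shows "(\<integral>\<^sup>+z. F z \<partial>lborel) = (\<integral>\<^sup>+x. \<integral>\<^sup>+y. F (Complex x y) \<partial>lborel \<partial>lborel)"
proof -
  have "(\<integral>\<^sup>+z. F z \<partial>lborel) = (\<integral>\<^sup>+z. F z \<partial>distr (lborel \<Otimes>\<^sub>M lborel) borel (\<lambda>p. Complex (fst p) (snd p)))"
    by (subst lborel_complex_distr) simp
  also have "\<dots> = (\<integral>\<^sup>+p. F (Complex (fst p) (snd p)) \<partial>(lborel \<Otimes>\<^sub>M lborel))"
    by (rule nn_integral_distr) measurable
  also have "\<dots> = (\<integral>\<^sup>+x. \<integral>\<^sup>+y. F (Complex x y) \<partial>lborel \<partial>lborel)"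
    using lborel.nn_integral_fst[where f="\<lambda>p::real\<times>real. F (Complex (fst p) (snd p))"] by simp
  finally show ?thesis .
qed

lemma nn_integral_translate:
  fixes c :: "'a::euclidean_space" and g :: "'a \<Rightarrow> ennreal"
  assumes [measurable]: "g \<in> borel_measurable borel"
  shows "(\<integral>\<^sup>+x. g (c + x) \<partial>lborel) = integral\<^sup>N lborel g"
proof -
  have "integral\<^sup>N lborel g = integral\<^sup>N (distr lborel borel ((+) c)) g"
    by (simp add: lborel_distr_plus)
  also have "\<dots> = (\<integral>\<^sup>+x. g (c + x) \<partial>lborel)"
    by (rule nn_integral_distr) auto
  finally show ?thesis ..
qed

lemma nn_integral_shear1:
  fixes F :: "complex \<Rightarrow> ennreal"
  assumes [measurable]: "F \<in> borel_measurable borel"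
  shows "(\<integral>\<^sup>+z. F (z + of_real (s * Im z)) \<partial>lborel) = integral\<^sup>N lborel F"
proof -
  have m2[measurable]: "(\<lambda>z. F (z + of_real (s * Im z))) \<in> borel_measurable borel"
    by measurable
  have "(\<integral>\<^sup>+z. F (z + of_real (s * Im z)) \<partial>lborel) = (\<integral>\<^sup>+x. \<integral>\<^sup>+y. F (Complex (x + s * y) y) \<partial>lborel \<partial>lborel)"
    by (subst nn_integral_complex) (auto simp: complex_eq_iff intro!: nn_integral_cong arg_cong[where f=F])
  also have "\<dots> = (\<integral>\<^sup>+y. \<integral>\<^sup>+x. F (Complex (x + s * y) y) \<partial>lborel \<partial>lborel)"
    by (rule lborel_pair.Fubini'[symmetric]) measurable
  also have "\<dots> = (\<integral>\<^sup>+y. \<integral>\<^sup>+x. F (Complex x y) \<partial>lborel \<partial>lborel)"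
    using nn_integral_translate[where c="s * y" and g="\<lambda>x. F (Complex x y)" for y]
    by (auto intro!: nn_integral_cong simp: add.commute)
  also have "\<dots> = (\<integral>\<^sup>+x. \<integral>\<^sup>+y. F (Complex x y) \<partial>lborel \<partial>lborel)"
    by (rule lborel_pair.Fubini') measurable
  also have "\<dots> = integral\<^sup>N lborel F"
    by (subst nn_integral_complex) auto
  finally show ?thesis .
qed

lemma nn_integral_shear2:
  fixes F :: "complex \<Rightarrow> ennreal"
  assumes [measurable]: "F \<in> borel_measurable borel"
  shows "(\<integral>\<^sup>+z. F (z + \<i> * of_real (s * Re z)) \<partial>lborel) = integral\<^sup>N lborel F"
proof -
  have m2[measurable]: "(\<lambda>z. F (z + \<i> * of_real (s * Re z))) \<in> borel_measurable borel"
    by measurable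
  have "(\<integral>\<^sup>+z. F (z + \<i> * of_real (s * Re z)) \<partial>lborel) = (\<integral>\<^sup>+x. \<integral>\<^sup>+y. F (Complex x (y + s * x)) \<partial>lborel \<partial>lborel)"
    by (subst nn_integral_complex) (auto simp: complex_eq_iff intro!: nn_integral_cong arg_cong[where f=F])
  also have "\<dots> = (\<integral>\<^sup>+x. \<integral>\<^sup>+y. F (Complex x y) \<partial>lborel \<partial>lborel)"
    using nn_integral_translate[where c="s * x" and g="\<lambda>y. F (Complex x y)" for x]
    by (auto intro!: nn_integral_cong simp: add.commute)
  also have "\<dots> = integral\<^sup>N lborel F"
    by (subst nn_integral_complex) auto
  finally show ?thesis .
qed

lemma rot_decomp:
  fixes a z :: complex
  assumes "cmod a = 1" "Re a > -1"
  defines "t \<equiv> Im a / (1 + Re a)"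
  shows "a * z = (\<lambda>v. v + of_real (- t * Im v)) ((\<lambda>u. u + \<i> * of_real (Im a * Re u)) (z + of_real (- t * Im z)))"
proof -
  have n: "(Re a)\<^sup>2 + (Im a)\<^sup>2 = 1" using assms(1) by (simp add: cmod_def)
  have p: "1 + Re a > 0" using assms by simp
  have st: "Im a * t = 1 - Re a" unfolding t_def using n p
    by (simp add: field_simps power2_eq_square)
  have t1: "t * (1 + Re a) = Im a" unfolding t_def using p by simp
  have e1: "1 - t * Im a = Re a" using st by (simp add: mult.commute)
  have e2: "t * (Im a * t - 2) = - Im a"
  proof -
    have "t * (Im a * t - 2) = t * (1 - Re a) - 2 * t" using st by (simp add: right_diff_distrib)
    also have "\<dots> = - (t * (1 + Re a))" by (simp add: algebra_simps)
    finally show ?thesis using t1 by simp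
  qed
  let ?r = "(\<lambda>v. v + of_real (- t * Im v)) ((\<lambda>u. u + \<i> * of_real (Im a * Re u)) (z + of_real (- t * Im z)))"
  have r1: "Re ?r = Re z * (1 - t * Im a) + Im z * (t * (Im a * t - 2))"
    by (simp add: algebra_simps)
  have r2: "Im ?r = Im z * (1 - t * Im a) + Im a * Re z"
    by (simp add: algebra_simps)
  show ?thesis
    by (simp only: complex_eq_iff r1 r2 e1 e2) simp
qed

lemma nn_integral_rot_aux:
  fixes F :: "complex \<Rightarrow> ennreal" and a :: complex
  assumes [measurable]: "F \<in> borel_measurable borel" and a: "cmod a = 1" "Re a > -1"
  shows "(\<integral>\<^sup>+z. F (a * z) \<partial>lborel) = integral\<^sup>N lborel F"
proof -
  define t where "t = Im a / (1 + Re a)"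
  define A where "A = (\<lambda>v::complex. v + of_real (- t * Im v))"
  define B where "B = (\<lambda>u::complex. u + \<i> * of_real (Im a * Re u))"
  have [measurable]: "A \<in> borel_measurable borel" "B \<in> borel_measurable borel"
    unfolding A_def B_def by measurable
  have eq: "a * z = A (B (A z))" for z
    using rot_decomp[OF a, of z] unfolding A_def B_def t_def by simp
  have "(\<integral>\<^sup>+z. F (a * z) \<partial>lborel) = (\<integral>\<^sup>+z. (\<lambda>u. F (A (B u))) (z + of_real (- t * Im z)) \<partial>lborel)"
    by (simp add: eq A_def)
  also have "\<dots> = (\<integral>\<^sup>+u. F (A (B u)) \<partial>lborel)"
    by (rule nn_integral_shear1) measurable
  also have "\<dots> = (\<integral>\<^sup>+u. (\<lambda>v. F (A v)) (u + \<i> * of_real (Im a * Re u)) \<partial>lborel)"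
    by (simp add: B_def)
  also have "\<dots> = (\<integral>\<^sup>+v. F (A v) \<partial>lborel)"
    by (rule nn_integral_shear2) measurable
  also have "\<dots> = integral\<^sup>N lborel F"
    unfolding A_def by (rule nn_integral_shear1) measurable
  finally show ?thesis .
qed

lemma nn_integral_rot:
  fixes F :: "complex \<Rightarrow> ennreal" and a :: complex
  assumes [measurable]: "F \<in> borel_measurable borel" and a: "cmod a = 1"
  shows "(\<integral>\<^sup>+z. F (a * z) \<partial>lborel) = integral\<^sup>N lborel F"
proof -
  define b where "b = csqrt a"
  have b1: "cmod b = 1" unfolding b_def using a by (simp add: norm_csqrt)
  have b2: "Re b > -1" unfolding b_def using Re_csqrt[of a] by linarith
  have ab: "a = b * b" unfolding b_def by (simp add: power2_eq_square[symmetric])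
  have [measurable]: "(\<lambda>z. F (b * z)) \<in> borel_measurable borel" by measurable
  have "(\<integral>\<^sup>+z. F (a * z) \<partial>lborel) = (\<integral>\<^sup>+z. (\<lambda>u. F (b * u)) (b * z) \<partial>lborel)"
    by (simp add: ab mult.assoc)
  also have "\<dots> = (\<integral>\<^sup>+u. F (b * u) \<partial>lborel)"
    by (rule nn_integral_rot_aux[OF _ b1 b2]) measurable
  also have "\<dots> = integral\<^sup>N lborel F"
    by (rule nn_integral_rot_aux[OF _ b1 b2]) measurable
  finally show ?thesis .
qed



lemma gauss_real_fin:
  fixes c :: real assumes c: "c > 0"
  shows "(\<integral>\<^sup>+x. ennreal (exp (- c * x\<^sup>2)) \<partial>lborel) < \<infinity>"
proof -
  define \<sigma> where "\<sigma> = sqrt (1 / (2 * c))"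
  have s2: "\<sigma>\<^sup>2 = 1 / (2 * c)" unfolding \<sigma>_def using c by simp
  have sp: "\<sigma> > 0" unfolding \<sigma>_def using c by simp
  have eq: "exp (- c * x\<^sup>2) = sqrt (2 * pi * \<sigma>\<^sup>2) * normal_density 0 \<sigma> x" for x
    unfolding normal_density_def using c pi_gt_zero by (simp add: s2 field_simps)
  have "integrable lborel (\<lambda>x. sqrt (2 * pi * \<sigma>\<^sup>2) * normal_density 0 \<sigma> x)"
    using sp by (intro integrable_mult_right integrable_normal_density) auto
  then have "integrable lborel (\<lambda>x. exp (- c * x\<^sup>2))" by (simp only: eq)
  from integrableD(2)[OF this] show ?thesis by (simp add: top.not_eq_extremum)
qed

lemma gauss_cplx_fin:
  fixes c :: real assumes c: "c > 0"
  shows "(\<integral>\<^sup>+z. ennreal (exp (- c * (cmod z)\<^sup>2)) \<partial>lborel) < \<infinity>"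
proof -
  let ?I = "\<integral>\<^sup>+x. ennreal (exp (- c * x\<^sup>2)) \<partial>lborel"
  have "(\<integral>\<^sup>+z. ennreal (exp (- c * (cmod z)\<^sup>2)) \<partial>lborel)
      = (\<integral>\<^sup>+x. \<integral>\<^sup>+y. ennreal (exp (- c * x\<^sup>2)) * ennreal (exp (- c * y\<^sup>2)) \<partial>lborel \<partial>lborel)"
  proof -
    have e: "ennreal (exp (- c * (cmod (Complex x y))\<^sup>2)) = ennreal (exp (- c * x\<^sup>2)) * ennreal (exp (- c * y\<^sup>2))" for x y
      by (simp add: cmod_def ennreal_mult[symmetric] exp_add[symmetric] algebra_simps)
    show ?thesis by (subst nn_integral_complex, measurable, simp only: e)
  qed
  also have "\<dots> = ?I * ?I"
    by (simp add: nn_integral_cmult nn_integral_multc)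
  finally show ?thesis using gauss_real_fin[OF c] by (simp add: ennreal_mult_less_top)
qed

lemma gauss_cplx_pos:
  fixes c :: real
  shows "(\<integral>\<^sup>+z. ennreal (exp (- c * (cmod z)\<^sup>2)) \<partial>lborel) > 0"
proof -
  have "(\<integral>\<^sup>+z. ennreal (exp (- c * (cmod z)\<^sup>2)) \<partial>lborel) \<noteq> 0"
  proof
    assume "(\<integral>\<^sup>+z. ennreal (exp (- c * (cmod z)\<^sup>2)) \<partial>lborel) = 0"
    then have "AE z in lborel. ennreal (exp (- c * (cmod z)\<^sup>2)) = 0"
      by (subst (asm) nn_integral_0_iff_AE) auto
    then have "AE z in (lborel::complex measure). False" by simp
    then show False using ae_filter_eq_bot_iff[of "lborel::complex measure"] by (simp add: eventually_False)
  qed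
  then show ?thesis by (simp add: zero_less_iff_neq_zero)
qed

lemma mean_value_circle:
  assumes "g holomorphic_on UNIV"
  shows "((\<lambda>x. g (exp (2 * of_real pi * \<i> * of_real x))) has_integral g 0) {0..1}"
proof -
  have "((\<lambda>u. g u / (u - 0)) has_contour_integral (2 * of_real pi * \<i> * g 0)) (circlepath 0 1)"
    by (rule Cauchy_integral_circlepath_simple) (use assms holomorphic_on_subset in auto)
  then have "((\<lambda>x. g (circlepath 0 1 x) / circlepath 0 1 x * vector_derivative (circlepath 0 1) (at x))
      has_integral (2 * of_real pi * \<i> * g 0)) {0..1}"
    by (simp add: has_contour_integral)
  then have "((\<lambda>x. (2 * of_real pi * \<i>) * g (exp (2 * of_real pi * \<i> * of_real x)))
      has_integral (2 * of_real pi * \<i> * g 0)) {0..1}"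
    by (simp only: vector_derivative_circlepath) (simp add: circlepath field_simps)
  then have "((\<lambda>x. inverse (2 * of_real pi * \<i>) * ((2 * of_real pi * \<i>) * g (exp (2 * of_real pi * \<i> * of_real x))))
      has_integral inverse (2 * of_real pi * \<i>) * (2 * of_real pi * \<i> * g 0)) {0..1}"
    by (rule has_integral_mult_right)
  moreover have ic: "\<And>y. inverse (2 * of_real pi * \<i>) * ((2 * of_real pi * \<i>) * y) = (y::complex)"
    by (simp add: field_simps)
  ultimately show ?thesis by (simp only: ic)
qed

lemma mean_value_bound:
  assumes "g holomorphic_on UNIV"
  shows "ennreal (cmod (g 0)) \<le> (\<integral>\<^sup>+x. indicator {0..1} x * ennreal (cmod (g (exp (2 * of_real pi * \<i> * of_real x)))) \<partial>lborel)"
proof -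
  let ?e = "\<lambda>x::real. exp (2 * of_real pi * \<i> * of_real x)"
  have cont: "continuous_on {0..1} (\<lambda>x. g (?e x))"
    by (rule continuous_on_compose2[OF holomorphic_on_imp_continuous_on[OF assms]]) (auto intro!: continuous_intros)
  have i1: "(\<lambda>x. g (?e x)) integrable_on {0..1}"
    by (rule integrable_continuous_interval[OF cont])
  have i2: "(\<lambda>x. cmod (g (?e x))) integrable_on {0..1}"
    by (rule integrable_continuous_interval) (intro continuous_on_norm cont)
  have "cmod (g 0) = cmod (integral {0..1} (\<lambda>x. g (?e x)))"
    using mean_value_circle[OF assms] by (simp add: integral_unique)
  also have "\<dots> \<le> integral {0..1} (\<lambda>x. cmod (g (?e x)))"
    by (rule Henstock_Kurzweil_Integration.integral_norm_bound_integral[OF i1 i2]) auto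
  finally have le: "cmod (g 0) \<le> integral {0..1} (\<lambda>x. cmod (g (?e x)))" .
  have "(\<integral>\<^sup>+x. indicator {0..1} x * ennreal (cmod (g (?e x))) \<partial>lborel) = ennreal (integral {0..1} (\<lambda>x. cmod (g (?e x))))"
    using nn_integral_has_integral_lebesgue'[OF _ i2[unfolded has_integral_integral]]
    by (simp add: mult.commute)
  with le show ?thesis by (simp add: ennreal_leI)
qed



lemma hol_measurable: "f holomorphic_on UNIV \<Longrightarrow> f \<in> borel_measurable borel"
  by (intro borel_measurable_continuous_onI holomorphic_on_imp_continuous_on)

lemma le_1_powr: "0 \<le> (y::real) \<Longrightarrow> 1 \<le> \<nu> \<Longrightarrow> y \<le> 1 + y powr \<nu>"
proof (cases "y \<le> 1")
  case True
  then show ?thesis by (smt (verit) powr_ge_zero)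
next
  case False
  assume "1 \<le> \<nu>"
  then have "y powr 1 \<le> y powr \<nu>" using False by (intro powr_mono) auto
  then show ?thesis using False by simp
qed

lemma cmod_ex [simp]: "cmod (exp (2 * of_real pi * \<i> * of_real x)) = 1"
proof -
  have "exp (2 * of_real pi * \<i> * of_real x) = exp (\<i> * of_real (2 * pi * x))"
    by (simp add: mult_ac)
  then show ?thesis by simp
qed

lemma step1:
  assumes nu: "1 \<le> \<nu>" and hol: "f holomorphic_on UNIV" and lam: "r > 0"
  shows "ennreal (cmod (f w) / r) \<le> 1 + (\<integral>\<^sup>+x. indicator {0..1} x *
            ennreal ((cmod (f (w + exp (2 * of_real pi * \<i> * of_real x) * \<zeta>)) / r) powr \<nu>) \<partial>lborel)"
proof -
  let ?e = "\<lambda>x::real. exp (2 * of_real pi * \<i> * of_real x)"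
  define g where "g = (\<lambda>u. f (w + u * \<zeta>) / of_real r)"
  have fm[measurable]: "f \<in> borel_measurable borel" by (rule hol_measurable[OF hol])
  have "(f \<circ> (\<lambda>u. w + u * \<zeta>)) holomorphic_on UNIV"
    by (rule holomorphic_on_compose) (auto intro!: holomorphic_intros holomorphic_on_subset[OF hol])
  then have gh: "g holomorphic_on UNIV" unfolding g_def o_def by (intro holomorphic_intros) auto
  have ng: "cmod (g u) = cmod (f (w + u * \<zeta>)) / r" for u
    using lam by (simp add: g_def norm_divide)
  have "ennreal (cmod (f w) / r) = ennreal (cmod (g 0))" by (simp add: ng)
  also have "\<dots> \<le> (\<integral>\<^sup>+x. indicator {0..1} x * ennreal (cmod (g (?e x))) \<partial>lborel)"
    by (rule mean_value_bound[OF gh])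
  also have "\<dots> \<le> (\<integral>\<^sup>+x. indicator {0..1} x + indicator {0..1} x * ennreal ((cmod (f (w + ?e x * \<zeta>)) / r) powr \<nu>) \<partial>lborel)"
  proof (rule nn_integral_mono)
    fix x
    have "ennreal (cmod (g (?e x))) \<le> ennreal (1 + (cmod (f (w + ?e x * \<zeta>)) / r) powr \<nu>)"
      unfolding ng using lam nu by (intro ennreal_leI le_1_powr) auto
    also have "\<dots> = 1 + ennreal ((cmod (f (w + ?e x * \<zeta>)) / r) powr \<nu>)"
      by (simp add: ennreal_plus)
    finally show "indicator {0..1} x * ennreal (cmod (g (?e x))) \<le> indicator {0..1} x + indicator {0..1} x * ennreal ((cmod (f (w + ?e x * \<zeta>)) / r) powr \<nu>)"
      by (auto simp: indicator_def)
  qed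
  also have "\<dots> = 1 + (\<integral>\<^sup>+x. indicator {0..1} x * ennreal ((cmod (f (w + ?e x * \<zeta>)) / r) powr \<nu>) \<partial>lborel)"
    by (subst nn_integral_add) auto
  finally show ?thesis .
qed

lemma step2:
  assumes nu: "1 \<le> \<nu>" and hol: "f holomorphic_on UNIV" and r: "r > 0"
  shows "ennreal (cmod (f w) / r) * (\<integral>\<^sup>+\<zeta>. ennreal (exp (- \<nu> * (cmod \<zeta>)\<^sup>2)) \<partial>lborel)
     \<le> (\<integral>\<^sup>+\<zeta>. ennreal (exp (- \<nu> * (cmod \<zeta>)\<^sup>2)) \<partial>lborel)
       + (\<integral>\<^sup>+\<zeta>. ennreal (exp (- \<nu> * (cmod \<zeta>)\<^sup>2)) * ennreal ((cmod (f (w + \<zeta>)) / r) powr \<nu>) \<partial>lborel)"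
proof -
  let ?e = "\<lambda>x::real. exp (2 * of_real pi * \<i> * of_real x)"
  let ?G = "\<lambda>\<zeta>::complex. ennreal (exp (- \<nu> * (cmod \<zeta>)\<^sup>2))"
  let ?H = "\<lambda>x \<zeta>. ennreal ((cmod (f (w + ?e x * \<zeta>)) / r) powr \<nu>)"
  let ?J = "(\<integral>\<^sup>+\<zeta>. ?G \<zeta> * ennreal ((cmod (f (w + \<zeta>)) / r) powr \<nu>) \<partial>lborel)"
  have fm[measurable]: "f \<in> borel_measurable borel" by (rule hol_measurable[OF hol])
  have "ennreal (cmod (f w) / r) * integral\<^sup>N lborel ?G = (\<integral>\<^sup>+\<zeta>. ?G \<zeta> * ennreal (cmod (f w) / r) \<partial>lborel)"
    by (subst nn_integral_multc) (auto simp: mult.commute)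
  also have "\<dots> \<le> (\<integral>\<^sup>+\<zeta>. ?G \<zeta> * (1 + (\<integral>\<^sup>+x. indicator {0..1} x * ?H x \<zeta> \<partial>lborel)) \<partial>lborel)"
    by (intro nn_integral_mono mult_left_mono step1[OF nu hol r]) auto
  also have "\<dots> = (\<integral>\<^sup>+\<zeta>. ?G \<zeta> + (\<integral>\<^sup>+x. indicator {0..1} x * (?G \<zeta> * ?H x \<zeta>) \<partial>lborel) \<partial>lborel)"
  proof (rule nn_integral_cong)
    fix \<zeta> :: complex
    have "?G \<zeta> * (\<integral>\<^sup>+x. indicator {0..1} x * ?H x \<zeta> \<partial>lborel) = (\<integral>\<^sup>+x. ?G \<zeta> * (indicator {0..1} x * ?H x \<zeta>) \<partial>lborel)"
      by (subst nn_integral_cmult) auto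
    then show "?G \<zeta> * (1 + (\<integral>\<^sup>+x. indicator {0..1} x * ?H x \<zeta> \<partial>lborel)) = ?G \<zeta> + (\<integral>\<^sup>+x. indicator {0..1} x * (?G \<zeta> * ?H x \<zeta>) \<partial>lborel)"
      by (simp add: distrib_left mult_ac)
  qed
  also have "\<dots> = integral\<^sup>N lborel ?G + (\<integral>\<^sup>+\<zeta>. (\<integral>\<^sup>+x. indicator {0..1} x * (?G \<zeta> * ?H x \<zeta>) \<partial>lborel) \<partial>lborel)"
    by (subst nn_integral_add) auto
  also have "(\<integral>\<^sup>+\<zeta>. (\<integral>\<^sup>+x. indicator {0..1} x * (?G \<zeta> * ?H x \<zeta>) \<partial>lborel) \<partial>lborel)
      = (\<integral>\<^sup>+x. (\<integral>\<^sup>+\<zeta>. indicator {0..1} x * (?G \<zeta> * ?H x \<zeta>) \<partial>lborel) \<partial>lborel)"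
    by (rule lborel_pair.Fubini') measurable
  also have "\<dots> = (\<integral>\<^sup>+x. indicator {0..1::real} x * ?J \<partial>lborel)"
  proof (intro nn_integral_cong)
    fix x :: real
    have "(\<integral>\<^sup>+\<zeta>. ?G \<zeta> * ?H x \<zeta> \<partial>lborel) = (\<integral>\<^sup>+\<zeta>. (\<lambda>u. ?G u * ennreal ((cmod (f (w + u)) / r) powr \<nu>)) (?e x * \<zeta>) \<partial>lborel)"
      by (simp add: norm_mult)
    also have "\<dots> = ?J"
      by (rule nn_integral_rot) auto
    finally have eq: "(\<integral>\<^sup>+\<zeta>. ?G \<zeta> * ?H x \<zeta> \<partial>lborel) = ?J" .
    show "(\<integral>\<^sup>+\<zeta>. indicator {0..1} x * (?G \<zeta> * ?H x \<zeta>) \<partial>lborel) = indicator {0..1} x * ?J"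
      using eq by (subst nn_integral_cmult) auto
  qed
  also have "\<dots> = ?J"
    by (subst nn_integral_multc) (auto simp: mult.commute)
  finally show ?thesis .
qed



lemma gauss_shift_le:
  fixes z w :: complex assumes "\<nu> \<ge> 0"
  shows "exp (- \<nu> * (cmod (z - w))\<^sup>2) \<le> exp (\<nu> * (cmod w)\<^sup>2) * exp (- \<nu> * (cmod z)\<^sup>2 / 2)"
proof -
  have t: "cmod z \<le> cmod (z - w) + cmod w" using norm_triangle_ineq[of "z - w" w] by simp
  have "(cmod z)\<^sup>2 \<le> (cmod (z - w) + cmod w)\<^sup>2" using t by (intro power_mono) auto
  also have "\<dots> \<le> 2 * (cmod (z - w))\<^sup>2 + 2 * (cmod w)\<^sup>2"
  proof -
    have "0 \<le> (cmod (z - w) - cmod w)\<^sup>2" by simp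
    then show ?thesis by (simp add: power2_eq_square algebra_simps)
  qed
  finally have zz: "(cmod z)\<^sup>2 \<le> 2 * (cmod (z - w))\<^sup>2 + 2 * (cmod w)\<^sup>2" .
  then have "- \<nu> * (cmod (z - w))\<^sup>2 \<le> \<nu> * (cmod w)\<^sup>2 + - \<nu> * (cmod z)\<^sup>2 / 2"
  proof -
    have "\<nu> * (cmod z)\<^sup>2 \<le> \<nu> * (2 * (cmod (z - w))\<^sup>2 + 2 * (cmod w)\<^sup>2)"
      using zz assms by (rule mult_left_mono)
    then show ?thesis by (simp add: algebra_simps)
  qed
  then show ?thesis by (simp add: exp_add[symmetric])
qed

lemma step3:
  assumes nu: "1 \<le> \<nu>" and hol: "f holomorphic_on UNIV" and r: "r > 0"
  shows "(\<integral>\<^sup>+\<zeta>. ennreal (exp (- \<nu> * (cmod \<zeta>)\<^sup>2)) * ennreal ((cmod (f (w + \<zeta>)) / r) powr \<nu>) \<partial>lborel)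
     \<le> ennreal (exp (\<nu> * (cmod w)\<^sup>2) / r powr \<nu>) * fock_integral \<nu> f"
proof -
  have fm[measurable]: "f \<in> borel_measurable borel" by (rule hol_measurable[OF hol])
  have "(\<integral>\<^sup>+\<zeta>. ennreal (exp (- \<nu> * (cmod \<zeta>)\<^sup>2) * cmod (f (w + \<zeta>)) powr \<nu>) \<partial>lborel)
     = (\<integral>\<^sup>+\<zeta>. (\<lambda>z. ennreal (exp (- \<nu> * (cmod (z - w))\<^sup>2) * cmod (f z) powr \<nu>)) (w + \<zeta>) \<partial>lborel)"
    by simp
  also have "\<dots> = (\<integral>\<^sup>+z. ennreal (exp (- \<nu> * (cmod (z - w))\<^sup>2) * cmod (f z) powr \<nu>) \<partial>lborel)"
    by (rule nn_integral_translate) measurable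
  also have "\<dots> \<le> (\<integral>\<^sup>+z. ennreal (exp (\<nu> * (cmod w)\<^sup>2)) * ennreal (cmod (f z) powr \<nu> * exp (- \<nu> * (cmod z)\<^sup>2 / 2)) \<partial>lborel)"
  proof (intro nn_integral_mono)
    fix z
    have "exp (- \<nu> * (cmod (z - w))\<^sup>2) * cmod (f z) powr \<nu> \<le> (exp (\<nu> * (cmod w)\<^sup>2) * exp (- \<nu> * (cmod z)\<^sup>2 / 2)) * cmod (f z) powr \<nu>"
      using gauss_shift_le[of \<nu> z w] nu by (intro mult_right_mono) auto
    then show "ennreal (exp (- \<nu> * (cmod (z - w))\<^sup>2) * cmod (f z) powr \<nu>) \<le> ennreal (exp (\<nu> * (cmod w)\<^sup>2)) * ennreal (cmod (f z) powr \<nu> * exp (- \<nu> * (cmod z)\<^sup>2 / 2))"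
      by (simp add: ennreal_mult'[symmetric] mult_ac ennreal_leI)
  qed
  also have "\<dots> = ennreal (exp (\<nu> * (cmod w)\<^sup>2)) * fock_integral \<nu> f"
    unfolding fock_integral_def by (subst nn_integral_cmult) auto
  finally have inner: "(\<integral>\<^sup>+\<zeta>. ennreal (exp (- \<nu> * (cmod \<zeta>)\<^sup>2) * cmod (f (w + \<zeta>)) powr \<nu>) \<partial>lborel) \<le> ennreal (exp (\<nu> * (cmod w)\<^sup>2)) * fock_integral \<nu> f" .
  have "(\<integral>\<^sup>+\<zeta>. ennreal (exp (- \<nu> * (cmod \<zeta>)\<^sup>2)) * ennreal ((cmod (f (w + \<zeta>)) / r) powr \<nu>) \<partial>lborel)
      = (\<integral>\<^sup>+\<zeta>. ennreal (1 / r powr \<nu>) * ennreal (exp (- \<nu> * (cmod \<zeta>)\<^sup>2) * cmod (f (w + \<zeta>)) powr \<nu>) \<partial>lborel)"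
    by (intro nn_integral_cong) (simp add: powr_divide ennreal_mult'[symmetric] r)
  also have "\<dots> = ennreal (1 / r powr \<nu>) * (\<integral>\<^sup>+\<zeta>. ennreal (exp (- \<nu> * (cmod \<zeta>)\<^sup>2) * cmod (f (w + \<zeta>)) powr \<nu>) \<partial>lborel)"
    by (subst nn_integral_cmult) auto
  also have "ennreal (1 / r powr \<nu>) * (\<integral>\<^sup>+\<zeta>. ennreal (exp (- \<nu> * (cmod \<zeta>)\<^sup>2) * cmod (f (w + \<zeta>)) powr \<nu>) \<partial>lborel)
     \<le> ennreal (1 / r powr \<nu>) * (ennreal (exp (\<nu> * (cmod w)\<^sup>2)) * fock_integral \<nu> f)"
    using inner by (rule mult_left_mono) auto
  also have "\<dots> = ennreal (exp (\<nu> * (cmod w)\<^sup>2) / r powr \<nu>) * fock_integral \<nu> f"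
    by (simp add: ennreal_mult'[symmetric] mult.assoc[symmetric])
  finally show ?thesis by simp
qed



definition IGc :: "real \<Rightarrow> real" where
  "IGc \<nu> = enn2real (\<integral>\<^sup>+\<zeta>. ennreal (exp (- \<nu> * (cmod \<zeta>)\<^sup>2)) \<partial>lborel)"

lemma IGc: assumes "\<nu> > 0"
  shows "IGc \<nu> > 0" "(\<integral>\<^sup>+\<zeta>. ennreal (exp (- \<nu> * (cmod \<zeta>)\<^sup>2)) \<partial>lborel) = ennreal (IGc \<nu>)"
proof -
  have f: "(\<integral>\<^sup>+\<zeta>. ennreal (exp (- \<nu> * (cmod \<zeta>)\<^sup>2)) \<partial>lborel) < \<infinity>" using gauss_cplx_fin[OF assms] .
  have p: "(\<integral>\<^sup>+\<zeta>. ennreal (exp (- \<nu> * (cmod \<zeta>)\<^sup>2)) \<partial>lborel) > 0" using gauss_cplx_pos .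
  show "(\<integral>\<^sup>+\<zeta>. ennreal (exp (- \<nu> * (cmod \<zeta>)\<^sup>2)) \<partial>lborel) = ennreal (IGc \<nu>)"
    unfolding IGc_def using f by (simp add: less_top)
  then show "IGc \<nu> > 0" using p by simp
qed

lemma point_eval_int:
  assumes nu: "1 \<le> \<nu>" and hol: "f holomorphic_on UNIV" and fin: "fock_integral \<nu> f < \<infinity>"
  shows "cmod (f w) \<le> (1 + 1 / IGc \<nu>) * exp ((cmod w)\<^sup>2) * (enn2real (fock_integral \<nu> f)) powr (1 / \<nu>)"
proof -
  define FI where "FI = enn2real (fock_integral \<nu> f)"
  define I where "I = IGc \<nu>"
  have nu0: "\<nu> > 0" using nu by simp
  have Ip: "I > 0" unfolding I_def using IGc(1)[OF nu0] .
  have FIe: "fock_integral \<nu> f = ennreal FI" unfolding FI_def using fin by (simp add: less_top)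
  have FI0: "FI \<ge> 0" unfolding FI_def by simp
  have key: "cmod (f w) / r * I \<le> I + exp (\<nu> * (cmod w)\<^sup>2) / r powr \<nu> * FI" if r: "r > 0" for r
  proof -
    have "ennreal (cmod (f w) / r) * ennreal I \<le> ennreal I + ennreal (exp (\<nu> * (cmod w)\<^sup>2) / r powr \<nu>) * ennreal FI"
      using step2[OF nu hol r, of w] step3[OF nu hol r, of w] IGc(2)[OF nu0] FIe unfolding I_def
      by (metis (no_types, lifting) add_left_mono order_trans)
    then have "ennreal (cmod (f w) / r * I) \<le> ennreal (I + exp (\<nu> * (cmod w)\<^sup>2) / r powr \<nu> * FI)"
      using r Ip FI0 by (simp add: ennreal_mult'[symmetric] ennreal_plus[symmetric] del: ennreal_plus)
    then show ?thesis using Ip FI0 r by (subst (asm) ennreal_le_iff) auto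
  qed
  show ?thesis
  proof (cases "FI = 0")
    case True
    have "cmod (f w) \<le> 0"
    proof (rule ccontr)
      assume "\<not> cmod (f w) \<le> 0"
      then have pos: "cmod (f w) > 0" by simp
      have "cmod (f w) / (cmod (f w) / 2) * I \<le> I" using key[of "cmod (f w) / 2"] pos True by simp
      then show False using pos Ip by simp
    qed
    then show ?thesis using True by (simp add: FI_def)
  next
    case False
    then have FIp: "FI > 0" using FI0 by simp
    define r where "r = exp ((cmod w)\<^sup>2) * FI powr (1 / \<nu>)"
    have rp: "r > 0" unfolding r_def using FIp by simp
    have rnu: "r powr \<nu> = exp (\<nu> * (cmod w)\<^sup>2) * FI"
    proof -
      have "r = exp ((cmod w)\<^sup>2 + ln FI / \<nu>)" unfolding r_def using FIp by (simp add: powr_def exp_add)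
      then have "r powr \<nu> = exp (\<nu> * ((cmod w)\<^sup>2 + ln FI / \<nu>))" by (simp add: powr_def)
      also have "\<dots> = exp (\<nu> * (cmod w)\<^sup>2 + ln FI)" using nu0 by (simp add: distrib_left)
      also have "\<dots> = exp (\<nu> * (cmod w)\<^sup>2) * FI" using FIp by (simp add: exp_add)
      finally show ?thesis .
    qed
    have "cmod (f w) / r * I \<le> I + 1" using key[OF rp] rnu FIp by simp
    then have "cmod (f w) / r \<le> 1 + 1 / I" using Ip by (simp add: field_simps)
    then have "cmod (f w) \<le> r * (1 + 1 / I)" using rp by (simp add: field_simps)
    then show ?thesis unfolding r_def I_def FI_def by (simp add: mult_ac)
  qed
qed

definition PK :: "real \<Rightarrow> real" where
  "PK \<nu> = (1 + 1 / IGc \<nu>) * (2 * pi / \<nu>) powr (1 / \<nu>)"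

lemma fock_norm_eq:
  assumes "\<nu> > 0"
  shows "enn2real (fock_integral \<nu> f) powr (1 / \<nu>) = (2 * pi / \<nu>) powr (1 / \<nu>) * fock_norm \<nu> f"
proof -
  have "(2 * pi / \<nu>) powr (1 / \<nu>) * fock_norm \<nu> f = ((2 * pi / \<nu>) * (\<nu> / (2 * pi) * enn2real (fock_integral \<nu> f))) powr (1 / \<nu>)"
    unfolding fock_norm_def using assms by (subst powr_mult) auto
  also have "\<dots> = enn2real (fock_integral \<nu> f) powr (1 / \<nu>)" using assms by simp
  finally show ?thesis ..
qed

lemma point_eval:
  assumes nu: "1 \<le> \<nu>" and f: "f \<in> fock_space \<nu>"
  shows "cmod (f w) \<le> PK \<nu> * exp ((cmod w)\<^sup>2) * fock_norm \<nu> f"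
  using point_eval_int[OF nu, of f w] f fock_norm_eq[of \<nu> f] nu
  by (simp add: fock_space_def PK_def mult_ac)

lemma PK_pos: "1 \<le> \<nu> \<Longrightarrow> PK \<nu> > 0"
  using IGc(1)[of \<nu>] by (simp add: PK_def add_pos_pos)



lemma comp_op_pow: "(comp_op \<phi> ^^ n) f = (\<lambda>z. f ((\<phi> ^^ n) z))"
proof (induction n)
  case 0 then show ?case by simp
next
  case (Suc n)
  have "(comp_op \<phi> ^^ Suc n) f = comp_op \<phi> ((comp_op \<phi> ^^ n) f)" by simp
  also have "\<dots> = ((comp_op \<phi> ^^ n) f) \<circ> \<phi>" by (simp add: comp_op_def)
  also have "\<dots> = (\<lambda>z. f ((\<phi> ^^ n) (\<phi> z)))" by (simp only: Suc.IH o_def)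
  also have "\<dots> = (\<lambda>z. f ((\<phi> ^^ Suc n) z))" by (simp add: funpow_Suc_right del: funpow.simps)
  finally show ?case .
qed

lemma funpow_mult: "((\<lambda>z. a * z) ^^ n) z = a ^ n * (z::complex)"
  by (induction n) (auto simp: mult_ac)

lemma funpow_affine:
  fixes a b :: complex assumes "a \<noteq> 1"
  shows "((\<lambda>z. a * z + b) ^^ n) z = b / (1 - a) + a ^ n * (z - b / (1 - a))"
proof (induction n)
  case 0 then show ?case by simp
next
  case (Suc n)
  have nz: "1 - a \<noteq> 0" using assms by simp
  have "((\<lambda>z. a * z + b) ^^ Suc n) z = a * (((\<lambda>z. a * z + b) ^^ n) z) + b" by simp
  also have "\<dots> = a * (b / (1 - a) + a ^ n * (z - b / (1 - a))) + b" by (simp only: Suc.IH)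
  also have "\<dots> = b / (1 - a) + a ^ Suc n * (z - b / (1 - a))"
  proof -
    define c where "c = b / (1 - a)"
    have ac: "a * c + b = c" using nz unfolding c_def by (simp add: field_simps)
    have "a * (c + a ^ n * (z - c)) + b = (a * c + b) + a ^ Suc n * (z - c)" by (simp add: algebra_simps)
    then show ?thesis using ac unfolding c_def by simp
  qed
  finally show ?case .
qed

lemma fock_integral_rot:
  assumes "f holomorphic_on UNIV" "cmod b = 1"
  shows "fock_integral \<nu> (\<lambda>z. f (b * z)) = fock_integral \<nu> f"
proof -
  have [measurable]: "f \<in> borel_measurable borel" using hol_measurable assms(1) by auto
  have "fock_integral \<nu> (\<lambda>z. f (b * z)) = (\<integral>\<^sup>+z. (\<lambda>u. ennreal (cmod (f u) powr \<nu> * exp (- \<nu> * (cmod u)\<^sup>2 / 2))) (b * z) \<partial>lborel)"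
    unfolding fock_integral_def using assms(2) by (simp add: norm_mult)
  also have "\<dots> = fock_integral \<nu> f"
    unfolding fock_integral_def by (rule nn_integral_rot[OF _ assms(2)]) measurable
  finally show ?thesis .
qed

lemma fock_int_bound:
  assumes nu: "\<nu> > 0" and M: "M \<ge> 0" and al: "\<alpha> < 1/2"
    and b: "\<And>z. cmod (g z) \<le> M * exp (\<alpha> * (cmod z)\<^sup>2)"
  shows "fock_integral \<nu> g \<le> ennreal (M powr \<nu>) * (\<integral>\<^sup>+z. ennreal (exp (- (\<nu> * (1/2 - \<alpha>)) * (cmod z)\<^sup>2)) \<partial>lborel)"
proof -
  have "fock_integral \<nu> g \<le> (\<integral>\<^sup>+z. ennreal (M powr \<nu>) * ennreal (exp (- (\<nu> * (1/2 - \<alpha>)) * (cmod z)\<^sup>2)) \<partial>lborel)"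
    unfolding fock_integral_def
  proof (intro nn_integral_mono)
    fix z
    have "cmod (g z) powr \<nu> \<le> (M * exp (\<alpha> * (cmod z)\<^sup>2)) powr \<nu>"
      using b nu by (intro powr_mono2) auto
    also have "\<dots> = M powr \<nu> * exp (\<nu> * \<alpha> * (cmod z)\<^sup>2)"
    proof -
      have "exp (\<alpha> * (cmod z)\<^sup>2) powr \<nu> = exp (\<nu> * \<alpha> * (cmod z)\<^sup>2)" by (simp add: powr_def mult_ac)
      then show ?thesis using M by (simp add: powr_mult)
    qed
    finally have "cmod (g z) powr \<nu> * exp (- \<nu> * (cmod z)\<^sup>2 / 2) \<le> M powr \<nu> * exp (\<nu> * \<alpha> * (cmod z)\<^sup>2) * exp (- \<nu> * (cmod z)\<^sup>2 / 2)"
      by (rule mult_right_mono) simp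
    also have "\<dots> = M powr \<nu> * exp (- (\<nu> * (1/2 - \<alpha>)) * (cmod z)\<^sup>2)"
      by (simp add: mult.assoc exp_add[symmetric] algebra_simps)
    finally show "ennreal (cmod (g z) powr \<nu> * exp (- \<nu> * (cmod z)\<^sup>2 / 2)) \<le> ennreal (M powr \<nu>) * ennreal (exp (- (\<nu> * (1/2 - \<alpha>)) * (cmod z)\<^sup>2))"
      by (simp add: ennreal_mult'[symmetric] ennreal_leI)
  qed
  also have "\<dots> = ennreal (M powr \<nu>) * (\<integral>\<^sup>+z. ennreal (exp (- (\<nu> * (1/2 - \<alpha>)) * (cmod z)\<^sup>2)) \<partial>lborel)"
    by (subst nn_integral_cmult) auto
  finally show ?thesis .
qed

definition QC :: "real \<Rightarrow> real \<Rightarrow> real" where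
  "QC \<nu> \<alpha> = (\<nu> / (2 * pi) * enn2real (\<integral>\<^sup>+z. ennreal (exp (- (\<nu> * (1/2 - \<alpha>)) * (cmod z)\<^sup>2)) \<partial>lborel)) powr (1 / \<nu>)"

lemma fock_norm_bound:
  assumes nu: "\<nu> > 0" and M: "M \<ge> 0" and al: "\<alpha> < 1/2" and hol: "g holomorphic_on UNIV"
    and b: "\<And>z. cmod (g z) \<le> M * exp (\<alpha> * (cmod z)\<^sup>2)"
  shows "g \<in> fock_space \<nu>" "fock_norm \<nu> g \<le> M * QC \<nu> \<alpha>"
proof -
  let ?Q = "\<integral>\<^sup>+z. ennreal (exp (- (\<nu> * (1/2 - \<alpha>)) * (cmod z)\<^sup>2)) \<partial>lborel"
  have c: "\<nu> * (1/2 - \<alpha>) > 0" using nu al by simp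
  have Qf: "?Q < \<infinity>" using gauss_cplx_fin[OF c] by simp
  then have Qe: "?Q = ennreal (enn2real ?Q)" by (simp add: less_top)
  have le: "fock_integral \<nu> g \<le> ennreal (M powr \<nu>) * ?Q" by (rule fock_int_bound[OF nu M al b])
  also have "\<dots> < \<infinity>" using Qf by (simp add: ennreal_mult_less_top)
  finally show "g \<in> fock_space \<nu>" using hol by (simp add: fock_space_def)
  have "enn2real (fock_integral \<nu> g) \<le> M powr \<nu> * enn2real ?Q"
  proof -
    have "fock_integral \<nu> g \<le> ennreal (M powr \<nu>) * ennreal (enn2real ?Q)"
      using le Qe by simp
    also have "\<dots> = ennreal (M powr \<nu> * enn2real ?Q)" by (simp add: ennreal_mult)
    finally have "fock_integral \<nu> g \<le> ennreal (M powr \<nu> * enn2real ?Q)" .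
    then have "enn2real (fock_integral \<nu> g) \<le> enn2real (ennreal (M powr \<nu> * enn2real ?Q))"
      by (rule enn2real_mono) simp
    then show ?thesis by simp
  qed
  then have "fock_norm \<nu> g \<le> (\<nu> / (2 * pi) * (M powr \<nu> * enn2real ?Q)) powr (1 / \<nu>)"
    unfolding fock_norm_def using nu by (intro powr_mono2) (auto intro!: mult_left_mono divide_right_mono)
  also have "\<dots> = (M powr \<nu>) powr (1 / \<nu>) * QC \<nu> \<alpha>"
    unfolding QC_def using nu by (subst powr_mult[symmetric]) (auto simp: mult_ac)
  also have "(M powr \<nu>) powr (1 / \<nu>) = M"
    using nu M by (simp add: powr_powr)
  finally show "fock_norm \<nu> g \<le> M * QC \<nu> \<alpha>" .
qed



lemma rot_in_fs:
  assumes f: "f \<in> fock_space \<nu>" and b: "cmod b = 1"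
  shows "(\<lambda>z. f (b * z)) \<in> fock_space \<nu>" "fock_norm \<nu> (\<lambda>z. f (b * z)) = fock_norm \<nu> f"
proof -
  have hol: "f holomorphic_on UNIV" using f by (simp add: fock_space_def)
  have "(f \<circ> (\<lambda>z. b * z)) holomorphic_on UNIV"
    by (rule holomorphic_on_compose) (auto intro!: holomorphic_intros holomorphic_on_subset[OF hol])
  then have h2: "(\<lambda>z. f (b * z)) holomorphic_on UNIV" by (simp add: o_def)
  have eq: "fock_integral \<nu> (\<lambda>z. f (b * z)) = fock_integral \<nu> f" by (rule fock_integral_rot[OF hol b])
  show "(\<lambda>z. f (b * z)) \<in> fock_space \<nu>" using f h2 eq by (simp add: fock_space_def)
  show "fock_norm \<nu> (\<lambda>z. f (b * z)) = fock_norm \<nu> f" using eq by (simp add: fock_norm_def)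
qed

lemma part1_unitary:
  assumes a: "cmod a = 1"
  shows "fock_unitary \<nu> (comp_op (\<lambda>z. a * z) ^^ n)"
proof -
  define b where "b = a ^ n"
  have b: "cmod b = 1" unfolding b_def using a by (simp add: norm_power)
  then have b0: "b \<noteq> 0" by auto
  have ib: "cmod (inverse b) = 1" using b by (simp add: norm_inverse)
  have T: "(comp_op (\<lambda>z. a * z) ^^ n) f = (\<lambda>z. f (b * z))" for f
    by (simp add: comp_op_pow funpow_mult b_def)
  show ?thesis
    unfolding fock_unitary_def fock_bounded_operator_def T
  proof (intro conjI ballI allI exI)
    fix f assume f: "f \<in> fock_space \<nu>"
    show "(\<lambda>z. f (b * z)) \<in> fock_space \<nu>" by (rule rot_in_fs(1)[OF f b])
    show "fock_norm \<nu> (\<lambda>z. f (b * z)) = fock_norm \<nu> f" by (rule rot_in_fs(2)[OF f b])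
    then show "fock_norm \<nu> (\<lambda>z. f (b * z)) \<le> 1 * fock_norm \<nu> f" by simp
  next
    fix g assume g: "g \<in> fock_space \<nu>"
    show "\<exists>f\<in>fock_space \<nu>. (\<lambda>z. f (b * z)) = g"
    proof (intro bexI)
      show "(\<lambda>z. g (inverse b * z)) \<in> fock_space \<nu>" by (rule rot_in_fs(1)[OF g ib])
      show "(\<lambda>z. (\<lambda>z. g (inverse b * z)) (b * z)) = g" using b0 by (simp add: mult.assoc[symmetric])
    qed
  qed auto
qed

lemma x_le_exp: "0 \<le> (x::real) \<Longrightarrow> x \<le> exp (1/4 * x\<^sup>2)"
proof -
  assume "0 \<le> x"
  have "x \<le> 1 + 1/4 * x\<^sup>2"
  proof -
    have "0 \<le> (x / 2 - 1)\<^sup>2" by simp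
    then show ?thesis by (simp add: power2_eq_square algebra_simps)
  qed
  also have "\<dots> \<le> exp (1/4 * x\<^sup>2)" by (rule exp_ge_add_one_self)
  finally show ?thesis .
qed

lemma id_in_fs: "1 \<le> \<nu> \<Longrightarrow> (\<lambda>z. z) \<in> fock_space \<nu>"
proof -
  assume nu: "1 \<le> \<nu>"
  have b: "cmod z \<le> 1 * exp (1/4 * (cmod z)\<^sup>2)" for z using x_le_exp[of "cmod z"] by simp
  show ?thesis by (rule fock_norm_bound(1)[of \<nu> 1 "1/4", OF _ _ _ _ b]) (use nu in auto)
qed

lemma eval_functional: "1 \<le> \<nu> \<Longrightarrow> fock_bounded_functional \<nu> (\<lambda>g. g w)"
  unfolding fock_bounded_functional_def
  using point_eval by blast

lemma part1_noconv:
  assumes nu: "1 \<le> \<nu>" and a: "cmod a = 1" "a \<noteq> 1"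
  shows "\<not> (\<exists>T. fock_bounded_operator \<nu> T \<and>
              (\<forall>f\<in>fock_space \<nu>. \<forall>\<Lambda>. fock_bounded_functional \<nu> \<Lambda> \<longrightarrow>
                 (\<lambda>n. \<Lambda> ((comp_op (\<lambda>z. a * z) ^^ n) f)) \<longlonglongrightarrow> \<Lambda> (T f)))"
proof
  assume "\<exists>T. fock_bounded_operator \<nu> T \<and>
              (\<forall>f\<in>fock_space \<nu>. \<forall>\<Lambda>. fock_bounded_functional \<nu> \<Lambda> \<longrightarrow>
                 (\<lambda>n. \<Lambda> ((comp_op (\<lambda>z. a * z) ^^ n) f)) \<longlonglongrightarrow> \<Lambda> (T f))"
  then obtain T where T: "\<forall>f\<in>fock_space \<nu>. \<forall>\<Lambda>. fock_bounded_functional \<nu> \<Lambda> \<longrightarrow>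
                 (\<lambda>n. \<Lambda> ((comp_op (\<lambda>z. a * z) ^^ n) f)) \<longlonglongrightarrow> \<Lambda> (T f)" by blast
  have "(\<lambda>n. (\<lambda>g. g 1) ((comp_op (\<lambda>z. a * z) ^^ n) (\<lambda>z. z))) \<longlonglongrightarrow> (\<lambda>g. g 1) (T (\<lambda>z. z))"
    using T id_in_fs[OF nu] eval_functional[OF nu] by blast
  then have L: "(\<lambda>n. a ^ n) \<longlonglongrightarrow> T (\<lambda>z. z) 1"
    by (simp add: comp_op_pow funpow_mult)
  define L where "L = T (\<lambda>z. z) 1"
  have L1: "(\<lambda>n. a ^ Suc n) \<longlonglongrightarrow> L" using L unfolding L_def by (rule LIMSEQ_Suc)
  have L2: "(\<lambda>n. a ^ Suc n) \<longlonglongrightarrow> a * L" using L unfolding L_def by (simp add: tendsto_mult_left)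
  have "L = a * L" using L1 L2 by (rule LIMSEQ_unique)
  then have L0: "L = 0" using a(2) by (metis mult_cancel_right2)
  have c1: "(\<lambda>n. cmod (a ^ n)) \<longlonglongrightarrow> cmod L" using L unfolding L_def by (rule tendsto_norm)
  have c2: "(\<lambda>n. cmod (a ^ n)) = (\<lambda>n. 1)" using a(1) by (simp add: norm_power)
  have "(\<lambda>n. 1::real) \<longlonglongrightarrow> cmod L" using c1 unfolding c2 .
  then have "cmod L = 1" by (simp add: LIMSEQ_const_iff)
  with L0 show False by simp
qed



lemma schwarz_bound:
  assumes hol: "h holomorphic_on UNIV" and h0: "h 0 = 0" and R: "R > 0"
    and bd: "\<And>s. cmod s \<le> R \<Longrightarrow> cmod (h s) \<le> M" and t: "cmod t < R"
  shows "cmod (h t) \<le> M * (cmod t / R)"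
proof -
  have M0: "M \<ge> 0" using bd[of 0] R h0 by simp
  have eps: "cmod (h t) \<le> (M + \<delta>) * (cmod t / R)" if d: "\<delta> > 0" for \<delta>
  proof -
    define k where "k = (\<lambda>s. h (of_real R * s) / of_real (M + \<delta>))"
    have Md: "M + \<delta> > 0" using M0 d by simp
    have "(h \<circ> (\<lambda>s. of_real R * s)) holomorphic_on UNIV"
      by (rule holomorphic_on_compose) (auto intro!: holomorphic_intros holomorphic_on_subset[OF hol])
    then have g: "(\<lambda>s. h (of_real R * s)) holomorphic_on UNIV" by (simp add: o_def)
    have nz: "complex_of_real (M + \<delta>) \<noteq> 0" using Md by (simp only: of_real_eq_0_iff)
    have "k holomorphic_on UNIV" unfolding k_def using nz
      by (intro holomorphic_on_divide g holomorphic_on_const) auto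
    then have kh: "k holomorphic_on ball 0 1" by (rule holomorphic_on_subset) auto
    have k0: "k 0 = 0" by (simp add: k_def h0)
    have e: "cmod (complex_of_real (M + \<delta>)) = M + \<delta>" using Md by (simp only: norm_of_real abs_of_pos)
    have kt: "k (t / of_real R) = h t / complex_of_real (M + \<delta>)" unfolding k_def using R by simp
    have kb: "cmod (k s) < 1" if s: "cmod s < 1" for s
    proof -
      have "cmod (of_real R * s) \<le> R" using s R by (simp add: norm_mult)
      then have "cmod (h (of_real R * s)) \<le> M" by (rule bd)
      moreover note e
      ultimately show ?thesis using Md d by (simp only: k_def norm_divide e) (simp add: divide_less_eq)
    qed
    have xi: "cmod (t / of_real R) < 1" using t R by (simp add: norm_divide)
    have "cmod (k (t / of_real R)) \<le> cmod (t / of_real R)"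
      by (rule Schwarz_Lemma(1)[OF kh k0 kb xi])
    then have "cmod (h t) / (M + \<delta>) \<le> cmod t / R"
      using R Md by (simp only: kt norm_divide e norm_of_real abs_of_pos)
    then show ?thesis using Md by (simp add: field_simps)
  qed
  define q where "q = cmod t / R"
  have q0: "q \<ge> 0" unfolding q_def using R by simp
  show ?thesis
  proof (cases "q = 0")
    case True
    then show ?thesis using eps[of 1] q_def R by auto
  next
    case False
    then have qp: "q > 0" using q0 by simp
    show ?thesis unfolding q_def[symmetric]
    proof (rule field_le_epsilon)
      fix e :: real assume e: "0 < e"
      have "e / q > 0" using e qp by simp
      from eps[OF this] have "cmod (h t) \<le> (M + e / q) * q" unfolding q_def .
      also have "\<dots> = M * q + e" using qp by (simp add: field_simps)
      finally show "cmod (h t) \<le> M * q + e" .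
    qed
  qed
qed

lemma rho_bound:
  fixes c z :: complex
  shows "(cmod c + cmod (z - c) / 3)\<^sup>2 \<le> 32/9 * (cmod c)\<^sup>2 + 2/9 * (cmod z)\<^sup>2"
proof -
  have "cmod (z - c) \<le> cmod z + cmod c" by (rule norm_triangle_ineq4)
  then have r: "cmod c + cmod (z - c) / 3 \<le> (4 * cmod c + cmod z) / 3" by simp
  have "(cmod c + cmod (z - c) / 3)\<^sup>2 \<le> ((4 * cmod c + cmod z) / 3)\<^sup>2"
    using r by (intro power_mono) auto
  also have "\<dots> \<le> 32/9 * (cmod c)\<^sup>2 + 2/9 * (cmod z)\<^sup>2"
  proof -
    have "0 \<le> (4 * cmod c - cmod z)\<^sup>2" by simp
    then show ?thesis by (simp add: power2_eq_square algebra_simps)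
  qed
  finally show ?thesis .
qed

lemma fock_norm_nonneg: "fock_norm \<nu> f \<ge> 0"
  by (simp add: fock_norm_def)

lemma part2_pointwise:
  assumes nu: "1 \<le> \<nu>" and f: "f \<in> fock_space \<nu>" and t: "cmod t < 1/3"
  shows "cmod (f (c + t * (z - c)) - f c)
    \<le> (6 * PK \<nu> * fock_norm \<nu> f * exp (32/9 * (cmod c)\<^sup>2) * cmod t) * exp (2/9 * (cmod z)\<^sup>2)"
proof -
  have hol: "f holomorphic_on UNIV" using f by (simp add: fock_space_def)
  define h where "h = (\<lambda>s. f (c + s * (z - c)) - f c)"
  have "(f \<circ> (\<lambda>s. c + s * (z - c))) holomorphic_on UNIV"
    by (rule holomorphic_on_compose) (auto intro!: holomorphic_intros holomorphic_on_subset[OF hol])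
  then have hh: "h holomorphic_on UNIV" unfolding h_def o_def by (intro holomorphic_intros) auto
  have h0: "h 0 = 0" by (simp add: h_def)
  define N where "N = fock_norm \<nu> f"
  define \<rho> where "\<rho> = cmod c + cmod (z - c) / 3"
  have N0: "N \<ge> 0" unfolding N_def by (rule fock_norm_nonneg)
  have PK0: "PK \<nu> > 0" by (rule PK_pos[OF nu])
  have pe: "cmod (f w) \<le> PK \<nu> * exp (\<rho>\<^sup>2) * N" if w: "cmod w \<le> \<rho>" for w
  proof -
    have "exp ((cmod w)\<^sup>2) \<le> exp (\<rho>\<^sup>2)" using w by (simp add: power_mono)
    then have "PK \<nu> * exp ((cmod w)\<^sup>2) * N \<le> PK \<nu> * exp (\<rho>\<^sup>2) * N"
      using PK0 N0 by (intro mult_right_mono mult_left_mono) auto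
    then show ?thesis using point_eval[OF nu f, of w] unfolding N_def by linarith
  qed
  have bd: "cmod (h s) \<le> 2 * PK \<nu> * exp (\<rho>\<^sup>2) * N" if s: "cmod s \<le> 1/3" for s
  proof -
    have "cmod (c + s * (z - c)) \<le> cmod c + cmod s * cmod (z - c)"
      using norm_triangle_ineq[of c "s * (z - c)"] by (simp add: norm_mult)
    also have "\<dots> \<le> \<rho>"
    proof -
      have "cmod s * cmod (z - c) \<le> 1/3 * cmod (z - c)" using s by (intro mult_right_mono) auto
      then show ?thesis unfolding \<rho>_def by simp
    qed
    finally have w1: "cmod (c + s * (z - c)) \<le> \<rho>" .
    have w2: "cmod c \<le> \<rho>" unfolding \<rho>_def by simp
    have "cmod (h s) \<le> cmod (f (c + s * (z - c))) + cmod (f c)"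
      unfolding h_def by (rule norm_triangle_ineq4)
    also have "\<dots> \<le> PK \<nu> * exp (\<rho>\<^sup>2) * N + PK \<nu> * exp (\<rho>\<^sup>2) * N"
      using pe[OF w1] pe[OF w2] by linarith
    finally show ?thesis by (simp add: mult_ac)
  qed
  have "cmod (h t) \<le> (2 * PK \<nu> * exp (\<rho>\<^sup>2) * N) * (cmod t / (1/3))"
    by (rule schwarz_bound[OF hh h0 _ bd t]) auto
  also have "\<dots> = 6 * PK \<nu> * N * cmod t * exp (\<rho>\<^sup>2)" by simp
  also have "\<dots> \<le> 6 * PK \<nu> * N * cmod t * (exp (32/9 * (cmod c)\<^sup>2) * exp (2/9 * (cmod z)\<^sup>2))"
  proof (rule mult_left_mono)
    show "exp (\<rho>\<^sup>2) \<le> exp (32/9 * (cmod c)\<^sup>2) * exp (2/9 * (cmod z)\<^sup>2)"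
      unfolding \<rho>_def exp_add[symmetric] using rho_bound[of c z] by simp
    show "0 \<le> 6 * PK \<nu> * N * cmod t" using PK0 N0 by simp
  qed
  finally show ?thesis unfolding h_def N_def by (simp add: mult_ac)
qed



lemma zero_in_fs: "(\<lambda>z. 0) \<in> fock_space \<nu>" "fock_norm \<nu> (\<lambda>z. 0) = 0"
  by (simp_all add: fock_space_def fock_integral_def fock_norm_def)

lemma QC_nonneg: "QC \<nu> \<alpha> \<ge> 0"
  by (simp add: QC_def)

lemma part2:
  assumes nu: "1 \<le> \<nu>" and a: "cmod a < 1"
  shows "(\<lambda>n. fock_op_dist \<nu> (comp_op (\<lambda>z. a * z + b) ^^ n) (\<lambda>f. (\<lambda>z. f (b / (1 - a))))) \<longlonglongrightarrow> 0"
proof -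
  define c where "c = b / (1 - a)"
  have a1: "a \<noteq> 1" using a by auto
  define K where "K = 6 * PK \<nu> * exp (32/9 * (cmod c)\<^sup>2) * QC \<nu> (2/9)"
  have PK0: "PK \<nu> > 0" by (rule PK_pos[OF nu])
  have K0: "K \<ge> 0" unfolding K_def using PK0 QC_nonneg[of \<nu> "2/9"] by simp
  have nu0: "\<nu> > 0" using nu by simp
  have T: "(comp_op (\<lambda>z. a * z + b) ^^ n) f = (\<lambda>z. f (c + a ^ n * (z - c)))" for n f
    by (simp add: comp_op_pow funpow_affine[OF a1] c_def)
  have lim0: "(\<lambda>n. cmod a ^ n) \<longlonglongrightarrow> 0" using a by (intro LIMSEQ_power_zero) auto
  have ev: "eventually (\<lambda>n. cmod a ^ n < 1/3) sequentially"
    using order_tendstoD(2)[OF lim0, of "1/3"] by simp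
  have ub: "fock_op_dist \<nu> (comp_op (\<lambda>z. a * z + b) ^^ n) (\<lambda>f. (\<lambda>z. f (b / (1 - a)))) \<le> ereal (K * cmod a ^ n)"
    if small: "cmod a ^ n < 1/3" for n
    unfolding fock_op_dist_def
  proof (rule SUP_least)
    fix f assume "f \<in> {f \<in> fock_space \<nu>. fock_norm \<nu> f \<le> 1}"
    then have f: "f \<in> fock_space \<nu>" and fn: "fock_norm \<nu> f \<le> 1" by auto
    have hol: "f holomorphic_on UNIV" using f by (simp add: fock_space_def)
    define g where "g = (\<lambda>z. f (c + a ^ n * (z - c)) - f c)"
    have "(f \<circ> (\<lambda>z. c + a ^ n * (z - c))) holomorphic_on UNIV"
      by (rule holomorphic_on_compose) (auto intro!: holomorphic_intros holomorphic_on_subset[OF hol])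
    then have gh: "g holomorphic_on UNIV" unfolding g_def o_def by (intro holomorphic_intros) auto
    define M where "M = 6 * PK \<nu> * fock_norm \<nu> f * exp (32/9 * (cmod c)\<^sup>2) * cmod (a ^ n)"
    have M0: "M \<ge> 0" unfolding M_def using PK0 fock_norm_nonneg[of \<nu> f] by simp
    have t: "cmod (a ^ n) < 1/3" using small by (simp add: norm_power)
    have gb: "cmod (g z) \<le> M * exp (2/9 * (cmod z)\<^sup>2)" for z
      unfolding g_def M_def by (rule part2_pointwise[OF nu f t])
    have gfs: "g \<in> fock_space \<nu>" by (rule fock_norm_bound(1)[OF nu0 M0 _ gh gb]) simp
    have "fock_norm \<nu> g \<le> M * QC \<nu> (2/9)" by (rule fock_norm_bound(2)[OF nu0 M0 _ gh gb]) simp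
    also have "\<dots> \<le> K * cmod a ^ n"
    proof -
      have "M \<le> 6 * PK \<nu> * 1 * exp (32/9 * (cmod c)\<^sup>2) * cmod (a ^ n)"
        unfolding M_def using fn PK0 by (intro mult_right_mono mult_left_mono) auto
      then have "M * QC \<nu> (2/9) \<le> (6 * PK \<nu> * 1 * exp (32/9 * (cmod c)\<^sup>2) * cmod (a ^ n)) * QC \<nu> (2/9)"
        using QC_nonneg by (rule mult_right_mono)
      then show ?thesis unfolding K_def by (simp add: norm_power mult_ac)
    qed
    finally have gn: "fock_norm \<nu> g \<le> K * cmod a ^ n" .
    have geq: "(\<lambda>z. (comp_op (\<lambda>z. a * z + b) ^^ n) f z - f (b / (1 - a))) = g"
      unfolding T g_def c_def by simp
    show "(let g = \<lambda>z. (comp_op (\<lambda>z. a * z + b) ^^ n) f z - f (b / (1 - a))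
          in if g \<in> fock_space \<nu> then ereal (fock_norm \<nu> g) else \<infinity>) \<le> ereal (K * cmod a ^ n)"
      unfolding geq Let_def using gfs gn by simp
  qed
  have lb: "0 \<le> fock_op_dist \<nu> (comp_op (\<lambda>z. a * z + b) ^^ n) (\<lambda>f. (\<lambda>z. f (b / (1 - a))))" for n
    unfolding fock_op_dist_def
  proof (rule SUP_upper2)
    show "(\<lambda>z. 0) \<in> {f \<in> fock_space \<nu>. fock_norm \<nu> f \<le> 1}" using zero_in_fs by simp
    show "0 \<le> (let g = \<lambda>z. (comp_op (\<lambda>z. a * z + b) ^^ n) (\<lambda>z. 0) z - (\<lambda>z. 0) (b / (1 - a))
          in if g \<in> fock_space \<nu> then ereal (fock_norm \<nu> g) else \<infinity>)"
      by (simp add: Let_def fock_norm_nonneg)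
  qed
  have up: "(\<lambda>n. ereal (K * cmod a ^ n)) \<longlonglongrightarrow> 0"
  proof -
    have "(\<lambda>n. K * cmod a ^ n) \<longlonglongrightarrow> K * 0" by (intro tendsto_intros lim0)
    then have "(\<lambda>n. ereal (K * cmod a ^ n)) \<longlonglongrightarrow> ereal 0" by (intro tendsto_ereal) simp
    then show ?thesis by (simp add: zero_ereal_def)
  qed
  show ?thesis
  proof (rule tendsto_sandwich[OF _ _ tendsto_const up])
    show "\<forall>\<^sub>F n in sequentially. 0 \<le> fock_op_dist \<nu> (comp_op (\<lambda>z. a * z + b) ^^ n) (\<lambda>f z. f (b / (1 - a)))"
      using lb by simp
    show "\<forall>\<^sub>F n in sequentially. fock_op_dist \<nu> (comp_op (\<lambda>z. a * z + b) ^^ n) (\<lambda>f z. f (b / (1 - a))) \<le> ereal (K * cmod a ^ n)"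
      using ev by (rule eventually_mono) (rule ub)
  qed
qed


theorem theorem2p2:
  fixes \<nu> :: real
  assumes "1 \<le> \<nu>"
  shows
    "(\<forall>a::complex. cmod a = 1 \<longrightarrow> a \<noteq> 1 \<longrightarrow>
        (\<forall>n\<ge>1. fock_unitary \<nu> (comp_op (\<lambda>z. a * z) ^^ n)) \<and>
        \<not> (\<exists>T. fock_bounded_operator \<nu> T \<and>
              (\<forall>f\<in>fock_space \<nu>. \<forall>\<Lambda>. fock_bounded_functional \<nu> \<Lambda> \<longrightarrow>
                 (\<lambda>n. \<Lambda> ((comp_op (\<lambda>z. a * z) ^^ n) f)) \<longlonglongrightarrow> \<Lambda> (T f))))
   \<and>
    (\<forall>a b::complex. cmod a < 1 \<longrightarrow>
        (\<lambda>n. fock_op_dist \<nu> (comp_op (\<lambda>z. a * z + b) ^^ n) (\<lambda>f. (\<lambda>z. f (b / (1 - a)))))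
          \<longlonglongrightarrow> 0)"
  using part1_unitary part1_noconv[OF assms] part2[OF assms] by blast

end
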